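(* Let $X$ be an infinite set. No topological extension ${}^{*}X$ of $X$ satisfies simultaneously the three principles Ind, Poss and Tran.
   Context: A topological extension of a set $X$ is a $T_1$ topological space ${}^{*}X$ containing $X$ as a discrete dense subspace, together with an assignment to each function $f:X\to X$ of a continuous map ${}^{*}f:{}^{*}X\to{}^{*}X$ extending $f$, such that (c) ${}^{*}g\circ{}^{*}f={}^{*}(g\circ f)$ for all $f,g:X\to X$, and (i) if $f(x)=x$ for all $x\in A\subseteq X$, then ${}^{*}f(\xi)=\xi$ for all $\xi$ in the closure of $A$ in ${}^{*}X$. For $A\subseteq X$ write ${}^{*}A$ for the closure of $A$ in ${}^{*}X$. Principle Ind: for any two distinct $\xi,\eta\in{}^{*}X$ there is $A\subseteq X$ with $\xi\in{}^{*}A$ and $\eta\notin{}^{*}A$. Principle Poss: for every family $\mathcal F$ of subsets of $X$, if $\bigcap_{A\in\mathcal F}{}^{*}A=\emptyset$, then there are finitely many $A_1,\dots,A_n\in\mathcal F$ with $A_1\cap\dots\cap A_n=\emptyset$. Principle Tran: let $L$ be the first-order language having a constant symbol for each element of $X$, an $n$-ary relation symbol for each $R\subseteq X^n$ and an $n$-ary function symbol for each $F:X^n\to X$ ($n\ge1$), and regard $X$ as an $L$-structure in the obvious way. ${}^{*}X$ satisfies Tran if ${}^{*}X$ can be made into an $L$-structure in which each constant $x$ denotes $x$, each unary function symbol $f$ denotes ${}^{*}f$ and each unary relation symbol $A$ denotes ${}^{*}A$, such that for every $L$-sentence $\sigma$, $\sigma$ holds in $X$ if and only if $\sigma$ holds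 in ${}^{*}X$. *)

theory Defs
  imports "HOL-Analysis.Analysis"
begin

text \<open>X is modelled by the type 'a (all of it); *X is the carrier topspace T of a
topology T on a type 'b; the inclusion of X in *X is the injective map j.
star f is the extension *f.\<close>

definition starset :: "'b topology \<Rightarrow> ('a \<Rightarrow> 'b) \<Rightarrow> 'a set \<Rightarrow> 'b set" where
  "starset T j A = T closure_of (j ` A)"

definition top_ext :: "'b topology \<Rightarrow> ('a \<Rightarrow> 'b) \<Rightarrow> (('a \<Rightarrow> 'a) \<Rightarrow> 'b \<Rightarrow> 'b) \<Rightarrow> bool" where
  "top_ext T j star \<longleftrightarrow>
     t1_space T \<and>
     inj j \<and> range j \<subseteq> topspace T \<and>
     subtopology T (range j) = discrete_topology (range j) \<and>
     T closure_of (range j) = topspace T \<and>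
     (\<forall>f. continuous_map T T (star f) \<and> (\<forall>x. star f (j x) = j (f x))) \<and>
     (\<forall>f g. \<forall>\<xi>\<in>topspace T. star g (star f \<xi>) = star (g \<circ> f) \<xi>) \<and>
     (\<forall>f A. (\<forall>x\<in>A. f x = x) \<longrightarrow> (\<forall>\<xi>\<in>starset T j A. star f \<xi> = \<xi>))"

definition Ind :: "'b topology \<Rightarrow> ('a \<Rightarrow> 'b) \<Rightarrow> bool" where
  "Ind T j \<longleftrightarrow> (\<forall>\<xi>\<in>topspace T. \<forall>\<eta>\<in>topspace T. \<xi> \<noteq> \<eta> \<longrightarrow>
      (\<exists>A. \<xi> \<in> starset T j A \<and> \<eta> \<notin> starset T j A))"

definition Poss :: "'b topology \<Rightarrow> ('a \<Rightarrow> 'b) \<Rightarrow> bool" where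
  "Poss T j \<longleftrightarrow> (\<forall>F :: 'a set set. (\<Inter>A\<in>F. starset T j A) = {} \<longrightarrow>
      (\<exists>G. finite G \<and> G \<subseteq> F \<and> \<Inter>G = {}))"

text \<open>Constant symbols: elements of X.  n-ary function symbols: pairs (n, F) with
n \<ge> 1 and F : X^n \<rightarrow> X, where X^n is represented by lists of length n.
n-ary relation symbols: pairs (n, R) with n \<ge> 1, R \<subseteq> X^n (a set of lists;
only its lists of length n matter).\<close>

datatype 'a tm = Var nat | Cst 'a | App nat "'a list \<Rightarrow> 'a" "'a tm list"

datatype 'a fm = Eq "'a tm" "'a tm" | Rl nat "'a list set" "'a tm list"
  | Neg "'a fm" | Conj "'a fm" "'a fm" | Ex nat "'a fm"

fun wf_tm :: "'a tm \<Rightarrow> bool" where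
  "wf_tm (Var v) = True"
| "wf_tm (Cst c) = True"
| "wf_tm (App n F ts) = (n \<ge> 1 \<and> length ts = n \<and> (\<forall>t\<in>set ts. wf_tm t))"

fun wf_fm :: "'a fm \<Rightarrow> bool" where
  "wf_fm (Eq s t) = (wf_tm s \<and> wf_tm t)"
| "wf_fm (Rl n R ts) = (n \<ge> 1 \<and> length ts = n \<and> (\<forall>t\<in>set ts. wf_tm t))"
| "wf_fm (Neg p) = wf_fm p"
| "wf_fm (Conj p q) = (wf_fm p \<and> wf_fm q)"
| "wf_fm (Ex v p) = wf_fm p"

fun fv_tm :: "'a tm \<Rightarrow> nat set" where
  "fv_tm (Var v) = {v}"
| "fv_tm (Cst c) = {}"
| "fv_tm (App n F ts) = (\<Union>t\<in>set ts. fv_tm t)"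

fun fv_fm :: "'a fm \<Rightarrow> nat set" where
  "fv_fm (Eq s t) = fv_tm s \<union> fv_tm t"
| "fv_fm (Rl n R ts) = (\<Union>t\<in>set ts. fv_tm t)"
| "fv_fm (Neg p) = fv_fm p"
| "fv_fm (Conj p q) = fv_fm p \<union> fv_fm q"
| "fv_fm (Ex v p) = fv_fm p - {v}"

definition sentence :: "'a fm \<Rightarrow> bool" where
  "sentence \<sigma> \<longleftrightarrow> wf_fm \<sigma> \<and> fv_fm \<sigma> = {}"

text \<open>An L-structure: domain D, constant interpretation c, function interpretation
fi (arity, symbol, arguments), relation interpretation ri.\<close>

fun tval :: "('a \<Rightarrow> 'c) \<Rightarrow> (nat \<Rightarrow> ('a list \<Rightarrow> 'a) \<Rightarrow> 'c list \<Rightarrow> 'c)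
      \<Rightarrow> (nat \<Rightarrow> 'c) \<Rightarrow> 'a tm \<Rightarrow> 'c" where
  "tval c fi e (Var v) = e v"
| "tval c fi e (Cst a) = c a"
| "tval c fi e (App n F ts) = fi n F (map (tval c fi e) ts)"

fun sat :: "'c set \<Rightarrow> ('a \<Rightarrow> 'c) \<Rightarrow> (nat \<Rightarrow> ('a list \<Rightarrow> 'a) \<Rightarrow> 'c list \<Rightarrow> 'c)
      \<Rightarrow> (nat \<Rightarrow> 'a list set \<Rightarrow> 'c list set) \<Rightarrow> (nat \<Rightarrow> 'c) \<Rightarrow> 'a fm \<Rightarrow> bool" where
  "sat D c fi ri e (Eq s t) = (tval c fi e s = tval c fi e t)"
| "sat D c fi ri e (Rl n R ts) = (map (tval c fi e) ts \<in> ri n R)"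
| "sat D c fi ri e (Neg p) = (\<not> sat D c fi ri e p)"
| "sat D c fi ri e (Conj p q) = (sat D c fi ri e p \<and> sat D c fi ri e q)"
| "sat D c fi ri e (Ex v p) = (\<exists>d\<in>D. sat D c fi ri (e(v := d)) p)"

definition holds :: "'c set \<Rightarrow> ('a \<Rightarrow> 'c) \<Rightarrow> (nat \<Rightarrow> ('a list \<Rightarrow> 'a) \<Rightarrow> 'c list \<Rightarrow> 'c)
      \<Rightarrow> (nat \<Rightarrow> 'a list set \<Rightarrow> 'c list set) \<Rightarrow> 'a fm \<Rightarrow> bool" where
  "holds D c fi ri \<sigma> \<longleftrightarrow> (\<forall>e. range e \<subseteq> D \<longrightarrow> sat D c fi ri e \<sigma>)"

definition holds_X :: "'a fm \<Rightarrow> bool" where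
  "holds_X \<sigma> \<longleftrightarrow> holds UNIV id (\<lambda>n F. F) (\<lambda>n R. R) \<sigma>"

definition Tran :: "'b topology \<Rightarrow> ('a \<Rightarrow> 'b) \<Rightarrow> (('a \<Rightarrow> 'a) \<Rightarrow> 'b \<Rightarrow> 'b) \<Rightarrow> bool" where
  "Tran T j star \<longleftrightarrow>
    (\<exists>(fi :: nat \<Rightarrow> ('a list \<Rightarrow> 'a) \<Rightarrow> 'b list \<Rightarrow> 'b) (ri :: nat \<Rightarrow> 'a list set \<Rightarrow> 'b list set).
       (\<forall>n F xs. length xs = n \<and> set xs \<subseteq> topspace T \<longrightarrow> fi n F xs \<in> topspace T) \<and>
       (\<forall>F. \<forall>\<xi>\<in>topspace T. fi 1 F [\<xi>] = star (\<lambda>x. F [x]) \<xi>) \<and>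
       (\<forall>R. \<forall>\<xi>\<in>topspace T. [\<xi>] \<in> ri 1 R \<longleftrightarrow> \<xi> \<in> starset T j {x. [x] \<in> R}) \<and>
       (\<forall>\<sigma>. sentence \<sigma> \<longrightarrow> (holds_X \<sigma> \<longleftrightarrow> holds (topspace T) j fi ri \<sigma>)))"

end

theory Submission
  imports Defs
begin

unbundle cardinal_syntax

lemma pairing_surj:
  assumes "infinite (UNIV :: 'a set)"
  shows "\<exists>q :: 'a \<Rightarrow> 'a \<times> 'a. surj q"
proof -
  have "|(UNIV::'a set) \<times> (UNIV::'a set)| =o |UNIV::'a set|"
    using assms card_of_Times_same_infinite by blast
  then obtain f where "bij_betw f ((UNIV::'a set) \<times> (UNIV::'a set)) (UNIV::'a set)"
    using card_of_ordIso by blast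
  then have "bij_betw (inv_into UNIV f) (UNIV::'a set) (UNIV \<times> UNIV)"
    by (simp add: bij_betw_inv_into)
  then show ?thesis by (auto simp: bij_betw_def)
qed

definition rel :: "'a set \<Rightarrow> 'a list set" where "rel A = (\<lambda>x. [x]) ` A"
definition fn :: "('a \<Rightarrow> 'a) \<Rightarrow> 'a list \<Rightarrow> 'a" where "fn p = (\<lambda>xs. p (hd xs))"

lemma rel_mem[simp]: "[x] \<in> rel A \<longleftrightarrow> x \<in> A" by (auto simp: rel_def)
lemma rel_set[simp]: "{x. [x] \<in> rel A} = A" by auto
lemma fn_un[simp]: "(\<lambda>x. fn p [x]) = p" by (simp add: fn_def)
lemma fn_ap[simp]: "fn p [x] = p x" by (simp add: fn_def)

lemma holds_neg_ex:
  assumes "holds D c fi ri (Neg (Ex 0 \<phi>))" "\<xi> \<in> D"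
  shows "\<not> sat D c fi ri (\<lambda>_. \<xi>) \<phi>"
proof -
  have "range (\<lambda>_. \<xi>) \<subseteq> D" using assms(2) by auto
  then have "sat D c fi ri (\<lambda>_. \<xi>) (Neg (Ex 0 \<phi>))" using assms(1) by (simp add: holds_def)
  then have "\<not> sat D c fi ri ((\<lambda>_. \<xi>)(0 := \<xi>)) \<phi>" using assms(2) by auto
  moreover have "((\<lambda>_. \<xi>)((0::nat) := \<xi>)) = (\<lambda>_. \<xi>)" by auto
  ultimately show ?thesis by simp
qed

theorem corollary2p4:
  fixes T :: "'b topology" and j :: "'a \<Rightarrow> 'b" and star :: "('a \<Rightarrow> 'a) \<Rightarrow> 'b \<Rightarrow> 'b"
  assumes "infinite (UNIV :: 'a set)"
    and "top_ext T j star"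
  shows "\<not> (Ind T j \<and> Poss T j \<and> Tran T j star)"
proof
  assume H: "Ind T j \<and> Poss T j \<and> Tran T j star"
  then obtain fi ri where
    fi1: "\<forall>F. \<forall>\<xi>\<in>topspace T. fi 1 F [\<xi>] = star (\<lambda>x. F [x]) \<xi>" and
    ri1: "\<forall>R. \<forall>\<xi>\<in>topspace T. [\<xi>] \<in> ri 1 R \<longleftrightarrow> \<xi> \<in> starset T j {x. [x] \<in> R}" and
    tr: "\<forall>\<sigma>. sentence \<sigma> \<longrightarrow> (holds_X \<sigma> \<longleftrightarrow> holds (topspace T) j fi ri \<sigma>)"
    unfolding Tran_def by blast
  have ind: "Ind T j" and poss: "Poss T j" using H by auto
  have te: "\<forall>f. continuous_map T T (star f)" and rj: "range j \<subseteq> topspace T"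
    and dense: "T closure_of (range j) = topspace T"
    using assms(2) unfolding top_ext_def by auto
  have stt: "star f \<xi> \<in> topspace T" if "\<xi> \<in> topspace T" for f \<xi>
    using te[rule_format, of f] that by (auto simp: continuous_map_def)
  have fi1': "fi 1 (fn p) [\<xi>] = star p \<xi>" if "\<xi> \<in> topspace T" for p \<xi>
  proof -
    have "fi 1 (fn p) [\<xi>] = star (\<lambda>x. fn p [x]) \<xi>" using fi1 that by blast
    then show ?thesis by simp
  qed
  have ri1': "[\<xi>] \<in> ri 1 (rel A) \<longleftrightarrow> \<xi> \<in> starset T j A" if "\<xi> \<in> topspace T" for A \<xi>
  proof -
    have "[\<xi>] \<in> ri 1 (rel A) \<longleftrightarrow> \<xi> \<in> starset T j {x. [x] \<in> rel A}" using ri1 that by blast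
    then show ?thesis by simp
  qed
  have ss_top: "starset T j A \<subseteq> topspace T" for A
    by (simp add: starset_def closure_of_subset_topspace)
  have T_int: "\<xi> \<in> starset T j (A \<inter> B)" if "\<xi> \<in> starset T j A" "\<xi> \<in> starset T j B" for A B \<xi>
  proof -
    let ?\<phi> = "Conj (Conj (Rl 1 (rel A) [Var 0]) (Rl 1 (rel B) [Var 0]))
               (Neg (Rl 1 (rel (A \<inter> B)) [Var 0]))"
    let ?\<sigma> = "Neg (Ex 0 ?\<phi>)"
    have "sentence ?\<sigma>" by (simp add: sentence_def)
    moreover have "holds_X ?\<sigma>" by (simp add: holds_X_def holds_def)
    ultimately have "holds (topspace T) j fi ri ?\<sigma>" using tr by blast
    moreover have xt: "\<xi> \<in> topspace T" using that ss_top by blast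
    ultimately have "\<not> sat (topspace T) j fi ri (\<lambda>_. \<xi>) ?\<phi>" by (rule holds_neg_ex)
    then show ?thesis using that ri1'[OF xt] by (simp only: sat.simps tval.simps list.map) blast
  qed
  have T_pre: "star p \<xi> \<in> starset T j A" if "\<xi> \<in> starset T j {z. p z \<in> A}" for p A \<xi>
  proof -
    let ?\<phi> = "Conj (Rl 1 (rel {z. p z \<in> A}) [Var 0])
               (Neg (Rl 1 (rel A) [App 1 (fn p) [Var 0]]))"
    let ?\<sigma> = "Neg (Ex 0 ?\<phi>)"
    have "sentence ?\<sigma>" by (simp add: sentence_def)
    moreover have "holds_X ?\<sigma>" by (simp add: holds_X_def holds_def)
    ultimately have "holds (topspace T) j fi ri ?\<sigma>" using tr by blast
    moreover have xt: "\<xi> \<in> topspace T" using that ss_top by blast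
    ultimately have "\<not> sat (topspace T) j fi ri (\<lambda>_. \<xi>) ?\<phi>" by (rule holds_neg_ex)
    then show ?thesis using that ri1'[OF xt] fi1'[OF xt] ri1'[OF stt[OF xt]] by (simp only: sat.simps tval.simps list.map) metis
  qed
  have T_dis: "\<not> (\<xi> \<in> starset T j A \<and> \<xi> \<in> starset T j (- A))" for A \<xi>
  proof
    assume a: "\<xi> \<in> starset T j A \<and> \<xi> \<in> starset T j (- A)"
    let ?\<phi> = "Conj (Rl 1 (rel A) [Var 0]) (Rl 1 (rel (- A)) [Var 0])"
    let ?\<sigma> = "Neg (Ex 0 ?\<phi>)"
    have "sentence ?\<sigma>" by (simp add: sentence_def)
    moreover have "holds_X ?\<sigma>" by (simp add: holds_X_def holds_def)
    ultimately have "holds (topspace T) j fi ri ?\<sigma>" using tr by blast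
    moreover have xt: "\<xi> \<in> topspace T" using a ss_top by blast
    ultimately have "\<not> sat (topspace T) j fi ri (\<lambda>_. \<xi>) ?\<phi>" by (rule holds_neg_ex)
    then show False using a ri1'[OF xt] by (simp only: sat.simps tval.simps list.map) blast
  qed
  have T_eq: "\<xi> \<in> starset T j {z. p1 z = p2 z}"
    if "\<xi> \<in> topspace T" "star p1 \<xi> = star p2 \<xi>" for p1 p2 \<xi>
  proof -
    let ?\<phi> = "Conj (Eq (App 1 (fn p1) [Var 0]) (App 1 (fn p2) [Var 0]))
               (Neg (Rl 1 (rel {z. p1 z = p2 z}) [Var 0]))"
    let ?\<sigma> = "Neg (Ex 0 ?\<phi>)"
    have "sentence ?\<sigma>" by (simp add: sentence_def)
    moreover have "holds_X ?\<sigma>" by (simp add: holds_X_def holds_def)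
    ultimately have "holds (topspace T) j fi ri ?\<sigma>" using tr by blast
    then have "\<not> sat (topspace T) j fi ri (\<lambda>_. \<xi>) ?\<phi>" using that(1) by (rule holds_neg_ex)
    then show ?thesis using that ri1'[OF that(1)] fi1'[OF that(1)] by (simp only: sat.simps tval.simps list.map) metis
  qed
  have empty: "starset T j {} = {}" by (simp add: starset_def)
  have univ: "starset T j UNIV = topspace T" using dense by (simp add: starset_def)
  obtain \<xi> where \<xi>: "\<And>x. \<xi> \<in> starset T j (- {x})"
  proof -
    let ?F = "range (\<lambda>x::'a. - {x})"
    have "(\<Inter>A\<in>?F. starset T j A) \<noteq> {}"
    proof
      assume e: "(\<Inter>A\<in>?F. starset T j A) = {}"
      obtain G where G: "finite G" "G \<subseteq> ?F" "\<Inter>G = {}"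
        using poss[unfolded Poss_def, rule_format, OF e] by blast
      then obtain S where "finite S" "G = (\<lambda>x. - {x}) ` S"
        using finite_subset_image[OF G(1) G(2)] by blast
      then have "\<Inter>G = - S" by auto
      then have "S = UNIV" using G(3) by auto
      then show False using \<open>finite S\<close> assms(1) by simp
    qed
    then obtain \<xi> where "\<xi> \<in> (\<Inter>A\<in>?F. starset T j A)" by blast
    then show ?thesis using that by blast
  qed
  have \<xi>top: "\<xi> \<in> topspace T" using \<xi> ss_top by blast
  define U where "U = {A. \<xi> \<in> starset T j A}"
  have U_int: "A \<in> U \<Longrightarrow> B \<in> U \<Longrightarrow> A \<inter> B \<in> U" for A B
    using T_int U_def by blast
  have U_ne: "A \<in> U \<Longrightarrow> A \<noteq> {}" for A using empty U_def by auto
  have U_two: "\<exists>a b. a \<in> A \<and> b \<in> A \<and> a \<noteq> b" if AU: "A \<in> U" for A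
  proof -
    obtain a where a: "a \<in> A" using U_ne[OF AU] by auto
    have "A \<inter> - {a} \<in> U" using U_int[OF AU] \<xi> U_def by auto
    then obtain b where "b \<in> A \<inter> - {a}" using U_ne by blast
    with a show ?thesis by auto
  qed
  obtain q :: "'a \<Rightarrow> 'a \<times> 'a" where q: "surj q" using pairing_surj[OF assms(1)] by blast
  define p1 where "p1 = fst \<circ> q"
  define p2 where "p2 = snd \<circ> q"
  define E where "E = - {z. p1 z = p2 z}"
  define F where "F = {{z. p1 z \<in> A} | A. A \<in> U} \<union> {{z. p2 z \<in> A} | A. A \<in> U} \<union> {E}"
  have fip: "\<exists>C\<in>U. {z. p1 z \<in> C \<and> p2 z \<in> C \<and> p1 z \<noteq> p2 z} \<subseteq> \<Inter>G"
    if "finite G" "G \<subseteq> F" for G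
    using that
  proof (induction G rule: finite_induct)
    case empty
    have "UNIV \<in> U" using univ \<xi>top U_def by auto
    then show ?case by blast
  next
    case (insert S G)
    then obtain C where C: "C \<in> U" "{z. p1 z \<in> C \<and> p2 z \<in> C \<and> p1 z \<noteq> p2 z} \<subseteq> \<Inter>G"
      by auto
    have "S \<in> F" using insert by auto
    then consider A where "A \<in> U" "S = {z. p1 z \<in> A}" | A where "A \<in> U" "S = {z. p2 z \<in> A}"
      | "S = E" unfolding F_def by blast
    then show ?case
    proof cases
      case (1 A)
      then show ?thesis using C U_int[of C A] by (intro bexI[of _ "C \<inter> A"]) auto
    next
      case (2 A)
      then show ?thesis using C U_int[of C A] by (intro bexI[of _ "C \<inter> A"]) auto
    next
      case 3
      then show ?thesis using C by (intro bexI[of _ C]) (auto simp: E_def)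
    qed
  qed
  have "(\<Inter>A\<in>F. starset T j A) \<noteq> {}"
  proof
    assume e: "(\<Inter>A\<in>F. starset T j A) = {}"
    obtain G where G: "finite G" "G \<subseteq> F" "\<Inter>G = {}"
      using poss[unfolded Poss_def, rule_format, OF e] by blast
    then obtain C where C: "C \<in> U" "{z. p1 z \<in> C \<and> p2 z \<in> C \<and> p1 z \<noteq> p2 z} \<subseteq> \<Inter>G"
      using fip by blast
    obtain a b where ab: "a \<in> C" "b \<in> C" "a \<noteq> b" using U_two[OF C(1)] by blast
    obtain z where "q z = (a, b)" using q by (metis surjD)
    then have "z \<in> {z. p1 z \<in> C \<and> p2 z \<in> C \<and> p1 z \<noteq> p2 z}"
      using ab by (simp add: p1_def p2_def)
    with C G show False by auto
  qed
  then obtain \<zeta> where \<zeta>: "\<And>A. A \<in> F \<Longrightarrow> \<zeta> \<in> starset T j A" by auto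
  have \<zeta>E: "\<zeta> \<in> starset T j E" using \<zeta> F_def by auto
  have \<zeta>top: "\<zeta> \<in> topspace T" using \<zeta>E ss_top by blast
  have proj: "star p \<zeta> = \<xi>"
    if "\<And>A. A \<in> U \<Longrightarrow> \<zeta> \<in> starset T j {z. p z \<in> A}" for p
  proof (rule ccontr)
    assume ne: "star p \<zeta> \<noteq> \<xi>"
    obtain A where "\<xi> \<in> starset T j A" "star p \<zeta> \<notin> starset T j A"
      using ind[unfolded Ind_def, rule_format, OF \<xi>top stt[OF \<zeta>top, of p] not_sym[OF ne]] by blast
    then show False using that[of A] T_pre U_def by blast
  qed
  have "star p1 \<zeta> = \<xi>" by (rule proj) (use \<zeta> F_def in blast)
  moreover have "star p2 \<zeta> = \<xi>" by (rule proj) (use \<zeta> F_def in blast)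
  ultimately have "\<zeta> \<in> starset T j {z. p1 z = p2 z}" by (intro T_eq \<zeta>top) simp
  with \<zeta>E T_dis show False unfolding E_def by blast
qed

end
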